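(* Let $R\subseteq\mathbb{N}$ be such that there is a positive integer $k$ with $R\cap k\mathbb{Z}=\emptyset$. Then for any positive integer $d$, there exists a colouring of $\mathbb{R}^d$ with $2k^2$ colours containing no monochromatic congruent copy of $rL^d$ for any $r\in R$.
   Context: $L^d$ denotes a three-point set $\{x,y,z\}\subseteq\mathbb{Z}^d$ with $\|x-y\|_2=\|y-z\|_2=1$ and $\|x-z\|_2=2$ (three equally spaced collinear points), and $rL^d=\{rx,ry,rz\}$. A congruent copy is the image under an isometry of $\mathbb{R}^d$. *)

theory Defs
  imports "HOL-Analysis.Analysis"
begin

definition int_point :: "real^'n \<Rightarrow> bool" where
  "int_point x \<longleftrightarrow> (\<forall>i. x $ i \<in> \<int>)"

definition isometry_map :: "(real^'n \<Rightarrow> real^'n) \<Rightarrow> bool" where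
  "isometry_map f \<longleftrightarrow> (\<forall>x y. dist (f x) (f y) = dist x y)"

text \<open>T is a congruent copy of r L^d: the image under an isometry of {r x, r y, r z},
  where {x,y,z} is a set L^d of integer points with |x-y|=|y-z|=1, |x-z|=2.\<close>
definition congruent_copy_rL :: "real \<Rightarrow> (real^'n) set \<Rightarrow> bool" where
  "congruent_copy_rL r T \<longleftrightarrow>
     (\<exists>f x y z. isometry_map f \<and> int_point x \<and> int_point y \<and> int_point z \<and>
        dist x y = 1 \<and> dist y z = 1 \<and> dist x z = 2 \<and>
        T = f ` {r *\<^sub>R x, r *\<^sub>R y, r *\<^sub>R z})"

definition monochromatic :: "('a \<Rightarrow> nat) \<Rightarrow> 'a set \<Rightarrow> bool" where
  "monochromatic c T \<longleftrightarrow> (\<exists>col. \<forall>p\<in>T. c p = col)"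

end

theory Submission
  imports Defs
begin
lemma geom:
  fixes a b c :: "real^'n"
  assumes "dist a b = r" "dist b c = r" "dist a c = 2 * r"
  shows "norm a ^ 2 - 2 * norm b ^ 2 + norm c ^ 2 = 2 * r ^ 2"
proof -
  define u where "u = a - b"
  define v where "v = c - b"
  have p: "norm (u + v) ^ 2 = 2 * norm u ^ 2 + 2 * norm v ^ 2 - norm (u - v) ^ 2"
    by (simp add: power2_norm_eq_inner inner_add_left inner_add_right inner_diff_left inner_diff_right inner_commute)
  have "norm u = r" "norm v = r" "norm (u - v) = 2 * r"
    using assms by (auto simp: dist_norm norm_minus_commute u_def v_def)
  with p have "norm (u + v) ^ 2 = 0" by (simp add: power_mult_distrib)
  hence uv: "v = - u" by (simp add: add_eq_0_iff)
  have ab: "a = b + u" and cb: "c = b - u" using uv by (simp_all add: u_def v_def algebra_simps)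
  have "norm a ^ 2 - 2 * norm b ^ 2 + norm c ^ 2 = 2 * norm u ^ 2"
    unfolding ab cb
    by (simp add: power2_norm_eq_inner inner_add_left inner_add_right inner_diff_left inner_diff_right inner_commute)
  also have "\<dots> = 2 * r ^ 2" using assms by (simp add: dist_norm u_def)
  finally show ?thesis .
qed
lemma arith:
  fixes x y z :: real and N M :: int
  assumes "x - 2 * y + z = 2 * of_int N" "M > 0"
    "floor x mod (2*M) = floor y mod (2*M)" "floor z mod (2*M) = floor y mod (2*M)"
  shows "M dvd N"
proof -
  define D where "D = floor x - 2 * floor y + floor z"
  have "(2*M) dvd (floor x - floor y)" "(2*M) dvd (floor z - floor y)"
    using assms(3,4) by (simp_all add: mod_eq_dvd_iff)
  hence "(2*M) dvd D" unfolding D_def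
    by (metis (no_types, lifting) dvd_add add_diff_eq diff_add_eq mult_2 diff_diff_eq2 add.commute add_diff_cancel_left diff_add_cancel)
  have e: "of_int (2 * N - D) = (x - floor x) - 2 * (y - floor y) + (z - floor z)"
    using assms(1) by (simp add: D_def)
  have "x - 1 < floor x" "floor x \<le> x" "y - 1 < floor y" "floor y \<le> y" "z - 1 < floor z" "floor z \<le> z"
    by linarith+
  note h = this
  have lin: "a - 2*b + c < 2 \<and> a - 2*b + c > -2" if "0 \<le> a" "a < 1" "0 \<le> b" "b < 1" "0 \<le> c" "c < 1" for a b c :: real
    using that by linarith
  have h1: "(x - floor x) - 2 * (y - floor y) + (z - floor z) < 2" 
   and h2: "(x - floor x) - 2 * (y - floor y) + (z - floor z) > -2"
    using lin[OF frac_ge_0 frac_lt_1 frac_ge_0 frac_lt_1 frac_ge_0 frac_lt_1, of x y z] by (simp_all add: frac_def)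
  have "2 * N - D < 2" using e h1 by linarith
  moreover have "2 * N - D > -2" using e h2 by linarith
  moreover have "even (2 * N - D)" using \<open>(2*M) dvd D\<close>
    by (metis dvd_diff dvd_triv_left dvd_mult_left)
  ultimately have "2 * N = D" by presburger
  hence "(2*M) dvd (2*N)" using \<open>(2*M) dvd D\<close> by simp
  thus ?thesis by (simp add: mult_dvd_mono)
qed
theorem proposition30:
  fixes R :: "nat set" and k :: nat
  assumes "k > 0" and "\<forall>r\<in>R. \<not> k dvd r"
  shows "\<exists>c :: real^'n \<Rightarrow> nat. (\<forall>p. c p < 2 * k^2) \<and>
           (\<forall>r\<in>R. \<forall>T. congruent_copy_rL (real r) T \<longrightarrow> \<not> monochromatic c T)"
proof -
  define M :: int where "M = int k ^ 2"
  have M0: "M > 0" using assms(1) by (simp add: M_def)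
  define c :: "real^'n \<Rightarrow> nat" where "c p = nat (floor (norm p ^ 2) mod (2*M))" for p
  have "\<forall>p. c p < 2 * k^2"
  proof
    fix p :: "real^'n"
    have "floor (norm p ^ 2) mod (2*M) < 2 * M" using M0 by simp
    hence "nat (floor (norm p ^ 2) mod (2*M)) < nat (2 * M)" using M0 by (simp add: nat_less_eq_zless)
    also have "nat (2 * M) = 2 * k^2" unfolding M_def by (simp add: nat_mult_distrib nat_power_eq)
    finally show "c p < 2 * k^2" unfolding c_def .
  qed
  moreover have "\<not> monochromatic c T" if r: "r \<in> R" and T: "congruent_copy_rL (real r) T" for r T
  proof
    assume mono: "monochromatic c T"
    from T obtain f x y z where f: "isometry_map f" and d: "dist x y = 1" "dist y z = 1" "dist x z = 2"
      and Teq: "T = f ` {real r *\<^sub>R x, real r *\<^sub>R y, real r *\<^sub>R z}"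
      unfolding congruent_copy_rL_def by blast
    define a where "a = f (real r *\<^sub>R x)"
    define b where "b = f (real r *\<^sub>R y)"
    define cc where "cc = f (real r *\<^sub>R z)"
    have ds: "dist (real r *\<^sub>R u) (real r *\<^sub>R v) = real r * dist u v" for u v :: "real^'n"
      by (simp add: dist_norm flip: scaleR_diff_right)
    have "dist a b = real r" "dist b cc = real r" "dist a cc = 2 * real r"
      using f d ds unfolding a_def b_def cc_def isometry_map_def by simp_all
    hence g: "norm a ^ 2 - 2 * norm b ^ 2 + norm cc ^ 2 = 2 * of_int (int r ^ 2)"
      using geom by simp
    from mono obtain col where col: "\<forall>p\<in>T. c p = col" unfolding monochromatic_def by blast
    have "c a = c b" "c cc = c b" using col Teq a_def b_def cc_def by auto
    hence "floor (norm a ^ 2) mod (2*M) = floor (norm b ^ 2) mod (2*M)"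
          "floor (norm cc ^ 2) mod (2*M) = floor (norm b ^ 2) mod (2*M)"
      unfolding c_def using M0 by (simp_all add: nat_eq_iff2)
    from arith[OF g M0 this] have "int k ^ 2 dvd int r ^ 2" by (simp add: M_def)
    hence "k dvd r" by (simp add: pow_divides_pow_iff flip: of_nat_power)
    with assms(2) r show False by blast
  qed
  ultimately show ?thesis by blast
qed

end
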